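(* For every $n>2$, let $K_{1,n-1}$ be the star graph on $n$ vertices. Then $\mathrm{ch}_{um}(H_P(K_{1,n-1}))\ge n-1$, while $\chi_{um}(H_P(K_{1,n-1}))=2$.
   Context: For a simple graph $G=(V,E)$, $H_P(G)$ is the hypergraph with vertex set $V$ whose hyperedges are the vertex sets of all simple paths in $G$. A coloring $C\colon V\to\mathbb Z_{>0}$ is unique-maximum if in every hyperedge the maximum color is attained by exactly one vertex. $\chi_{um}(H)$ is the minimum number of colors in a unique-maximum coloring of $H$. The um-choice number $\mathrm{ch}_{um}(H)$ is the minimum $k$ such that for every family $\{L_v\}_{v\in V}$ of sets of positive integers with $|L_v|\ge k$ there is a unique-maximum coloring $C$ with $C(v)\in L_v$ for all $v$. *)

theory Defs
  imports Main
begin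

text \<open>A simple graph is given by a vertex set V and a symmetric irreflexive
 edge relation E (a set of ordered pairs, each undirected edge present in both orientations).\<close>

type_synonym 'a graph = "'a set \<times> ('a \<times> 'a) set"
type_synonym 'a hypergraph = "'a set \<times> 'a set set"

definition simple_graph :: "'a graph \<Rightarrow> bool" where
  "simple_graph G \<longleftrightarrow> finite (fst G) \<and> snd G \<subseteq> fst G \<times> fst G \<and>
     (\<forall>u v. (u, v) \<in> snd G \<longrightarrow> (v, u) \<in> snd G \<and> u \<noteq> v)"

text \<open>Simple path: a nonempty list of distinct vertices, consecutive ones adjacent
 (a single vertex is a path of length 0).\<close>
definition simple_path :: "'a graph \<Rightarrow> 'a list \<Rightarrow> bool" where
  "simple_path G p \<longleftrightarrow> p \<noteq> [] \<and> distinct p \<and> set p \<subseteq> fst G \<and>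
     (\<forall>i. Suc i < length p \<longrightarrow> (p ! i, p ! Suc i) \<in> snd G)"

definition path_hypergraph :: "'a graph \<Rightarrow> 'a hypergraph" where
  "path_hypergraph G = (fst G, {set p | p. simple_path G p})"

definition um_coloring :: "'a hypergraph \<Rightarrow> ('a \<Rightarrow> nat) \<Rightarrow> bool" where
  "um_coloring H C \<longleftrightarrow> (\<forall>v\<in>fst H. C v > 0) \<and>
     (\<forall>e\<in>snd H. \<exists>!v. v \<in> e \<and> C v = Max (C ` e))"

definition chi_um :: "'a hypergraph \<Rightarrow> nat" where
  "chi_um H = (LEAST k. \<exists>C. um_coloring H C \<and> card (C ` fst H) = k)"

definition ch_um :: "'a hypergraph \<Rightarrow> nat" where
  "ch_um H = (LEAST k. \<forall>L :: 'a \<Rightarrow> nat set.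
      (\<forall>v\<in>fst H. (\<forall>c\<in>L v. c > 0) \<and> (infinite (L v) \<or> k \<le> card (L v))) \<longrightarrow>
      (\<exists>C. um_coloring H C \<and> (\<forall>v\<in>fst H. C v \<in> L v)))"

definition star_graph :: "nat \<Rightarrow> nat graph" where
  "star_graph n = ({0..<n}, {(0, i) | i. 1 \<le> i \<and> i < n} \<union> {(i, 0) | i. 1 \<le> i \<and> i < n})"

end

theory Submission
  imports Defs
begin

lemma inj_choice:
  assumes "finite S" "card S \<le> m" "\<forall>v\<in>S. infinite (L v) \<or> m \<le> card (L v)"
  shows "\<exists>f. inj_on f S \<and> (\<forall>v\<in>S. f v \<in> L v)"
  using assms
proof (induction S rule: finite_induct)
  case empty then show ?case by auto
next
  case (insert x S)
  then obtain f where f: "inj_on f S" "\<forall>v\<in>S. f v \<in> L v" by auto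
  have "L x - f ` S \<noteq> {}"
  proof
    assume h: "L x - f ` S = {}"
    hence sub: "L x \<subseteq> f ` S" by auto
    have "finite (L x)" using sub insert(1) finite_subset by blast
    hence "m \<le> card (L x)" using insert by auto
    moreover have "card (L x) \<le> card (f ` S)" using sub insert(1) by (simp add: card_mono)
    moreover have "card (f ` S) \<le> card S" using card_image_le insert(1) by blast
    ultimately show False using insert by auto
  qed
  then obtain c where c: "c \<in> L x" "c \<notin> f ` S" by auto
  show ?case
    apply (rule exI[of _ "f(x := c)"])
    using f c insert(2) by (auto simp: inj_on_def)
qed

lemma um_edge:
  assumes "um_coloring H C" "e \<in> snd H"
  shows "\<exists>!v. v \<in> e \<and> C v = Max (C ` e)"
  using assms unfolding um_coloring_def by simp

lemma inj_um:
  assumes "\<forall>e\<in>snd H. finite e \<and> e \<noteq> {}" "inj_on C (fst H)" "\<forall>e\<in>snd H. e \<subseteq> fst H"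
    "\<forall>v\<in>fst H. C v > 0"
  shows "um_coloring H C"
  unfolding um_coloring_def
proof (intro conjI ballI)
  fix e assume e: "e \<in> snd H"
  have fe: "finite (C ` e)" "C ` e \<noteq> {}" using assms(1) e by auto
  then have "Max (C ` e) \<in> C ` e" by (rule Max_in)
  then obtain v where v: "v \<in> e" "C v = Max (C ` e)" by auto
  show "\<exists>!v. v \<in> e \<and> C v = Max (C ` e)"
  proof (rule ex1I[of _ v])
    show "v \<in> e \<and> C v = Max (C ` e)" using v by auto
    fix w assume "w \<in> e \<and> C w = Max (C ` e)"
    then show "w = v" using v assms(2,3) e by (metis inj_onD subsetD)
  qed
qed (use assms in auto)

lemma edges_ok:
  "\<forall>e\<in>snd (path_hypergraph G). finite e \<and> e \<noteq> {} \<and> e \<subseteq> fst G"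
  unfolding path_hypergraph_def simple_path_def by auto

lemma path3:
  assumes "1 \<le> i" "i < n" "1 \<le> j" "j < n" "i \<noteq> j"
  shows "{i, 0, j} \<in> snd (path_hypergraph (star_graph n))"
proof -
  have "simple_path (star_graph n) [i, 0, j]"
    unfolding simple_path_def star_graph_def using assms
    by (auto simp: less_Suc_eq nth_Cons split: nat.splits)
  then show ?thesis unfolding path_hypergraph_def
    by (auto intro!: exI[of _ "[i,0,j]"])
qed

lemma path2:
  assumes "1 \<le> i" "i < n"
  shows "{0, i} \<in> snd (path_hypergraph (star_graph n))"
proof -
  have "simple_path (star_graph n) [0, i]"
    unfolding simple_path_def star_graph_def using assms
    by (auto simp: less_Suc_eq nth_Cons split: nat.splits)
  then show ?thesis unfolding path_hypergraph_def
    by (auto intro!: exI[of _ "[0,i]"])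
qed

theorem mainTheorem10:
  fixes n :: nat
  assumes "n > 2"
  shows "ch_um (path_hypergraph (star_graph n)) \<ge> n - 1 \<and>
         chi_um (path_hypergraph (star_graph n)) = 2"
proof
  let ?H = "path_hypergraph (star_graph n)"
  have V: "fst ?H = {0..<n}" by (simp add: path_hypergraph_def star_graph_def)
  define P where "P k \<longleftrightarrow> (\<forall>L :: nat \<Rightarrow> nat set.
      (\<forall>v\<in>fst ?H. (\<forall>c\<in>L v. c > 0) \<and> (infinite (L v) \<or> k \<le> card (L v))) \<longrightarrow>
      (\<exists>C. um_coloring ?H C \<and> (\<forall>v\<in>fst ?H. C v \<in> L v)))" for k
  have Pn: "P n"
    unfolding P_def
  proof (intro allI impI)
    fix L :: "nat \<Rightarrow> nat set"
    assume h: "\<forall>v\<in>fst ?H. (\<forall>c\<in>L v. c > 0) \<and> (infinite (L v) \<or> n \<le> card (L v))"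
    obtain f where f: "inj_on f {0..<n}" "\<forall>v\<in>{0..<n}. f v \<in> L v"
      using inj_choice[of "{0..<n}" n L] h V by auto
    have "um_coloring ?H f"
    proof (rule inj_um)
      show "\<forall>e\<in>snd ?H. finite e \<and> e \<noteq> {}" using edges_ok[of "star_graph n"] by blast
      show "\<forall>e\<in>snd ?H. e \<subseteq> fst ?H" using edges_ok[of "star_graph n"] V
        by (simp add: path_hypergraph_def)
      show "inj_on f (fst ?H)" using f V by simp
      show "\<forall>v\<in>fst ?H. 0 < f v" using f h V by auto
    qed
    then show "\<exists>C. um_coloring ?H C \<and> (\<forall>v\<in>fst ?H. C v \<in> L v)" using f V by auto
  qed
  have notP: "\<not> P k" if k: "k \<le> n - 2" for k
  proof
    assume Pk: "P k"
    define L where "L v = (if v = 0 then {1..n-2} else {n-1..2*n-4})" for v :: nat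
    have "\<forall>v\<in>fst ?H. (\<forall>c\<in>L v. c > 0) \<and> (infinite (L v) \<or> k \<le> card (L v))"
    proof
      fix v assume "v \<in> fst ?H"
      have ar: "Suc (Suc (2 * n - 4)) - n = n - 2" using assms by arith
      have "card (L v) = n - 2" using assms ar by (simp add: L_def)
      moreover have "\<forall>c\<in>L v. c > 0" using assms by (auto simp: L_def)
      ultimately show "(\<forall>c\<in>L v. c > 0) \<and> (infinite (L v) \<or> k \<le> card (L v))" using k by simp
    qed
    then have "\<exists>C. um_coloring ?H C \<and> (\<forall>v\<in>fst ?H. C v \<in> L v)"
      using Pk unfolding P_def by (rule_tac mp) (erule allE)
    then obtain C where C: "um_coloring ?H C" "\<forall>v\<in>fst ?H. C v \<in> L v" by blast
    have lt: "C 0 < C i" if "1 \<le> i" "i < n" for i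
    proof -
      have a: "\<forall>v\<in>{0..<n}. C v \<in> L v" using C(2) V by simp
      have "C 0 \<in> L 0" "C i \<in> L i" using a[rule_format, of 0] a[rule_format, of i] that assms by auto
      then have "C 0 \<in> {1..n-2}" "C i \<in> {n-1..2*n-4}" using that by (auto simp: L_def)
      then show ?thesis using assms by auto
    qed
    have "inj_on C {1..<n}"
    proof (rule inj_onI, rule ccontr)
      fix i j assume ij: "i \<in> {1..<n}" "j \<in> {1..<n}" "C i = C j" "i \<noteq> j"
      have e: "{i, 0, j} \<in> snd ?H" using path3 ij by auto
      have im: "C ` {i, 0, j} = {C i, C 0}" using ij(3) by auto
      have "C 0 < C i" using lt ij by auto
      then have mx: "Max (C ` {i, 0, j}) = C i" unfolding im by simp
      have u: "\<exists>!v. v \<in> {i,0,j} \<and> C v = Max (C ` {i,0,j})"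
        by (rule um_edge[OF C(1) e])
      have "i \<in> {i,0,j} \<and> C i = Max (C ` {i,0,j})" "j \<in> {i,0,j} \<and> C j = Max (C ` {i,0,j})"
        using mx ij(3) by auto
      then show False using u ij(4) by metis
    qed
    moreover have "C ` {1..<n} \<subseteq> {n-1..2*n-4}"
    proof
      fix x assume "x \<in> C ` {1..<n}"
      then obtain i where i: "i \<in> {1..<n}" "x = C i" by auto
      have a: "\<forall>v\<in>{0..<n}. C v \<in> L v" using C(2) V by simp
      have "C i \<in> L i" using a i by auto
      then show "x \<in> {n-1..2*n-4}" using i by (simp add: L_def)
    qed
    ultimately have "card {1..<n} \<le> card {n-1..2*n-4}"
      by (intro card_inj_on_le[of C]) auto
    then show False using assms by simp
  qed
  have ch: "ch_um ?H = (LEAST k. P k)" unfolding ch_um_def P_def by simp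
  have "P (LEAST k. P k)" using Pn by (rule LeastI)
  then have "\<not> (LEAST k. P k) \<le> n - 2" using notP by blast
  then show "ch_um ?H \<ge> n - 1" using ch by simp
next
  let ?H = "path_hypergraph (star_graph n)"
  have V: "fst ?H = {0..<n}" by (simp add: path_hypergraph_def star_graph_def)
  define C where "C v = (if v = 0 then 2 else (1::nat))" for v :: nat
  have umC: "um_coloring ?H C"
    unfolding um_coloring_def
  proof (intro conjI ballI)
    fix v assume "v \<in> fst ?H" then show "0 < C v" by (simp add: C_def)
  next
    fix e assume "e \<in> snd ?H"
    then obtain p where p: "simple_path (star_graph n) p" "e = set p"
      by (auto simp: path_hypergraph_def)
    have fe: "finite e" "e \<noteq> {}" using p by (auto simp: simple_path_def)
    show "\<exists>!v. v \<in> e \<and> C v = Max (C ` e)"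
    proof (cases "0 \<in> e")
      case True
      have "Max (C ` e) = 2"
        using True fe by (intro Max_eqI) (auto simp: C_def)
      then show ?thesis using True by (intro ex1I[of _ 0]) (auto simp: C_def split: if_splits)
    next
      case False
      have "length p < 2"
      proof (rule ccontr)
        assume "\<not> length p < 2"
        then have "(p ! 0, p ! Suc 0) \<in> snd (star_graph n)" using p(1)
          unfolding simple_path_def by auto
        then have "p ! 0 = 0 \<or> p ! Suc 0 = 0" by (auto simp: star_graph_def)
        moreover have "p ! 0 \<in> e" "p ! Suc 0 \<in> e" proof -
          have "0 < length p" "Suc 0 < length p" using \<open>\<not> length p < 2\<close> by auto
          then show "p ! 0 \<in> e" "p ! Suc 0 \<in> e" using p(2) by (simp_all add: nth_mem)
        qed
        ultimately show False using False by auto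
      qed
      then obtain a where "p = [a]" using p(1) unfolding simple_path_def
        by (cases p) auto
      then show ?thesis using p by auto
    qed
  qed
  have img: "card (C ` fst ?H) = 2"
  proof -
    have "C ` {0..<n} = {1,2}"
    proof
      show "C ` {0..<n} \<subseteq> {1,2}" by (auto simp: C_def)
      have "C 0 = 2" "C 1 = 1" "0 \<in> {0..<n}" "1 \<in> {0..<n}" using assms by (auto simp: C_def)
      then show "{1,2} \<subseteq> C ` {0..<n}" by (metis empty_subsetI image_eqI insert_subset)
    qed
    then show ?thesis using V by simp
  qed
  have low: "k \<ge> 2" if "um_coloring ?H D" "card (D ` fst ?H) = k" for D k
  proof (rule ccontr)
    assume "\<not> k \<ge> 2"
    have ne: "D ` {0..<n} \<noteq> {}" using assms by auto
    have "card (D ` {0..<n}) \<noteq> 0" using ne by simp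
    moreover have "card (D ` {0..<n}) = k" using that(2) V by simp
    ultimately have "card (D ` {0..<n}) = 1" using \<open>\<not> k \<ge> 2\<close> by linarith
    then obtain c where c: "D ` {0..<n} = {c}" by (auto simp: card_Suc_eq)
    have d01: "D 0 = c" "D 1 = c" using c assms by auto
    have e: "{0, 1} \<in> snd ?H" using path2[of 1 n] assms by auto
    have "\<exists>!v. v \<in> {0,1::nat} \<and> D v = Max (D ` {0,1})"
      by (rule um_edge[OF that(1) e])
    then show False using d01 by auto
  qed
  show "chi_um ?H = 2"
    unfolding chi_um_def
    apply (rule Least_equality)
    using umC img low by auto
qed

end
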